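(* Let $\mathbf b\in\mathrm{Comp}_{p,n}$ and $\boldsymbol\lambda\in\mathcal P_{d,\mathbf b}$, let $o_{\boldsymbol\lambda}=\min\{k\ge1:\boldsymbol\lambda^{[k+t]}=\boldsymbol\lambda^{[t]}\ \forall t\}$, $p_{\boldsymbol\lambda}=p/o_{\boldsymbol\lambda}$, $n_{\boldsymbol\lambda}=n/p_{\boldsymbol\lambda}$, and $\sqrt{\boldsymbol\lambda}=(\boldsymbol\lambda^{[1]},\dots,\boldsymbol\lambda^{[o_{\boldsymbol\lambda}]})$ (the first $do_{\boldsymbol\lambda}$ components of $\boldsymbol\lambda$). Then the numbers $\gamma_{\mathbf b}(\sqrt{\boldsymbol\lambda})=\big(\ell(w_{\mathbf b})+\sum_{a=1}^p\beta(\overrightarrow{\boldsymbol\lambda^{[a]}})-\beta(\overrightarrow{\boldsymbol\lambda})\big)/p_{\boldsymbol\lambda}$ and $\alpha(\boldsymbol\lambda)=\frac12 n_{\boldsymbol\lambda}(rp-do_{\boldsymbol\lambda})-d\alpha(\mathbf b)/p_{\boldsymbol\lambda}$ are integers, and setting $$g_{\boldsymbol\lambda}=\dot\varepsilon^{\alpha(\boldsymbol\lambda)}\dot q^{\gamma_{\mathbf b}(\sqrt{\boldsymbol\lambda})}(\dot Q_1\cdots\dot Q_d)^{n_{\boldsymbol\lambda}(p-1)}\prod_{(i,j,s)\in[\sqrt{\boldsymbol\lambda}]}\ \prod_{1\le t\le do_{\boldsymbol\lambda}}\ \prod_{\substack{0\le a<p_{\boldsymbol\lambda}\\ a\ne0\text{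 if }p_t=p_s}}\big(\dot\varepsilon^{ao_{\boldsymbol\lambda}}h^{\boldsymbol\lambda}_{ij}(s,t)-1\big)$$ one has $g_{\boldsymbol\lambda}\in\mathbb Z[\dot\varepsilon,\dot q^{\pm1},\dot Q_1^{\pm1},\dots,\dot Q_d^{\pm1}]$ and $$f_{\boldsymbol\lambda}=\dot\varepsilon^{\frac12 do_{\boldsymbol\lambda}n(1-p_{\boldsymbol\lambda})}\,g_{\boldsymbol\lambda}^{\,p_{\boldsymbol\lambda}}.$$
   Context: Setting: $p>1$, $d\ge1$, $n\ge3$, $r=pd$; $\mathcal F=\mathbb Q(\dot\varepsilon,\dot q,\dot Q_1,\dots,\dot Q_d)$, $\dot\varepsilon\in\mathbb C$ a primitive $p$th root of unity, $\dot q,\dot Q_i$ indeterminates. $\mathbf b=(b_1,\dots,b_p)$ is a composition of $n$ into $p$ nonnegative parts, $\alpha(\mathbf b)=\sum_iib_i$, $\ell(w_{\mathbf b})=\sum_{i<j}b_ib_j$. For an $r$-multipartition $\boldsymbol\lambda=(\lambda^{(1)},\dots,\lambda^{(r)})$, $\boldsymbol\lambda^{[t]}=(\lambda^{(dt-d+1)},\dots,\lambda^{(dt)})$ with $\boldsymbol\lambda^{[t+kp]}=\boldsymbol\lambda^{[t]}$; $\mathcal P_{d,\mathbf b}$ is the set of $\boldsymbol\lambda$ with $|\boldsymbol\lambda^{[t]}|=b_t$. $f_{\boldsymbol\lambda}$ is the explicit element $f_{\boldsymbol\lambda}=\dot\varepsilon^{\frac12 rn(p-1)-d\alpha(\mathbf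 b)}\dot q^{\ell(w_{\mathbf b})-\beta(\overrightarrow{\boldsymbol\lambda})+\sum_a\beta(\overrightarrow{\boldsymbol\lambda^{[a]}})}(\dot Q_1\cdots\dot Q_d)^{n(p-1)}\prod_{(i,j,s)\in[\boldsymbol\lambda]}\prod_{1\le t\le r,\,p_t\ne p_s}(h^{\boldsymbol\lambda}_{ij}(s,t)-1)$, which is the scalar by which the central element $z_{\mathbf b}$ of $\mathcal H_{d,\mathbf b}$ acts on the Specht module $S_{\mathbf b}(\boldsymbol\lambda)$. Notation: $\beta(\lambda)=\sum_i(i-1)\lambda_i$ for a partition; $\overrightarrow{\boldsymbol\mu}$ is the partition formed by all parts of all components of $\boldsymbol\mu$ sorted decreasingly; $[\boldsymbol\mu]=\{(i,j,s):1\le j\le\mu^{(s)}_i\}$; $h_{ij}(\lambda,\mu)=\lambda_i-i+\mu'_j-j+1$; each $1\le s\le r$ is written $s=d(p_s-1)+d_s$ with $1\le p_s\le p$, $1\le d_s\le d$; $h^{\boldsymbol\lambda}_{ij}(s,t)=\dot\varepsilon^{p_s-p_t}\dot q^{h_{ij}(\lambda^{(s)},\lambda^{(t)})}\dot Q_{d_s}\dot Q_{d_t}^{-1}$. *)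

theory Defs
  imports Complex_Main
begin

definition is_partition :: "nat list \<Rightarrow> bool" where
  "is_partition l \<longleftrightarrow> sorted_wrt (\<ge>) l \<and> (\<forall>x\<in>set l. 0 < x)"

text \<open>lambda_i for i >= 1 (0 beyond the length)\<close>
definition part :: "nat list \<Rightarrow> nat \<Rightarrow> nat" where
  "part l i = (if 1 \<le> i \<and> i \<le> length l then l ! (i - 1) else 0)"

definition conjp :: "nat list \<Rightarrow> nat \<Rightarrow> nat" where
  "conjp l j = length (filter (\<lambda>x. j \<le> x) l)"

definition beta :: "nat list \<Rightarrow> nat" where
  "beta l = (\<Sum>i<length l. i * l ! i)"

definition hook :: "nat list \<Rightarrow> nat list \<Rightarrow> nat \<Rightarrow> nat \<Rightarrow> int" where
  "hook l m i j = int (part l i) - int i + int (conjp m j) - int j + 1"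

definition arrow :: "nat list list \<Rightarrow> nat list" where
  "arrow ls = rev (sort (concat ls))"

definition is_comp :: "nat \<Rightarrow> nat \<Rightarrow> (nat \<Rightarrow> nat) \<Rightarrow> bool" where
  "is_comp p n b \<longleftrightarrow> (\<Sum>i=1..p. b i) = n"

definition alpha_comp :: "nat \<Rightarrow> (nat \<Rightarrow> nat) \<Rightarrow> nat" where
  "alpha_comp p b = (\<Sum>i=1..p. i * b i)"

definition ell_w :: "nat \<Rightarrow> (nat \<Rightarrow> nat) \<Rightarrow> nat" where
  "ell_w p b = (\<Sum>i=1..p. \<Sum>j=i+1..p. b i * b j)"

definition is_multipart :: "nat \<Rightarrow> (nat \<Rightarrow> nat list) \<Rightarrow> bool" where
  "is_multipart r lam \<longleftrightarrow> (\<forall>s\<in>{1..r}. is_partition (lam s))"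

text \<open>lambda^[t] (t >= 1), indices taken periodically modulo p\<close>
definition blk :: "nat \<Rightarrow> nat \<Rightarrow> (nat \<Rightarrow> nat list) \<Rightarrow> nat \<Rightarrow> nat list list" where
  "blk p d lam t = map (\<lambda>c. lam (d * ((t - 1) mod p) + c)) [1..<d+1]"

definition Pdb :: "nat \<Rightarrow> nat \<Rightarrow> (nat \<Rightarrow> nat) \<Rightarrow> (nat \<Rightarrow> nat list) set" where
  "Pdb p d b = {lam. is_multipart (p * d) lam \<and>
      (\<forall>t\<in>{1..p}. sum_list (map sum_list (blk p d lam t)) = b t)}"

definition olam :: "nat \<Rightarrow> nat \<Rightarrow> (nat \<Rightarrow> nat list) \<Rightarrow> nat" where
  "olam p d lam = (LEAST k. 1 \<le> k \<and> (\<forall>t\<ge>1. blk p d lam (k + t) = blk p d lam t))"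

definition plam :: "nat \<Rightarrow> nat \<Rightarrow> (nat \<Rightarrow> nat list) \<Rightarrow> nat" where
  "plam p d lam = p div olam p d lam"

definition nlam :: "nat \<Rightarrow> nat \<Rightarrow> nat \<Rightarrow> (nat \<Rightarrow> nat list) \<Rightarrow> nat" where
  "nlam p d n lam = n div plam p d lam"

text \<open>s = d(p_s - 1) + d_s\<close>
definition pidx :: "nat \<Rightarrow> nat \<Rightarrow> nat" where "pidx d s = (s - 1) div d + 1"
definition didx :: "nat \<Rightarrow> nat \<Rightarrow> nat" where "didx d s = (s - 1) mod d + 1"

definition cells :: "(nat \<Rightarrow> nat list) \<Rightarrow> nat set \<Rightarrow> (nat \<times> nat \<times> nat) set" where
  "cells lam S = {(i, j, s). s \<in> S \<and> 1 \<le> i \<and> 1 \<le> j \<and> j \<le> part (lam s) i}"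

definition hlam :: "complex \<Rightarrow> complex \<Rightarrow> (nat \<Rightarrow> complex) \<Rightarrow> nat \<Rightarrow> (nat \<Rightarrow> nat list)
    \<Rightarrow> nat \<Rightarrow> nat \<Rightarrow> nat \<Rightarrow> nat \<Rightarrow> complex" where
  "hlam eps q Q d lam i j s t =
     eps powi (int (pidx d s) - int (pidx d t)) * q powi (hook (lam s) (lam t) i j)
     * Q (didx d s) / Q (didx d t)"

definition qexp :: "nat \<Rightarrow> nat \<Rightarrow> (nat \<Rightarrow> nat) \<Rightarrow> (nat \<Rightarrow> nat list) \<Rightarrow> int" where
  "qexp p d b lam = int (ell_w p b) - int (beta (arrow (map lam [1..<p*d+1])))
      + (\<Sum>a=1..p. int (beta (arrow (blk p d lam a))))"

definition f_lam :: "nat \<Rightarrow> nat \<Rightarrow> nat \<Rightarrow> (nat \<Rightarrow> nat) \<Rightarrow> (nat \<Rightarrow> nat list)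
    \<Rightarrow> complex \<Rightarrow> complex \<Rightarrow> (nat \<Rightarrow> complex) \<Rightarrow> complex" where
  "f_lam p d n b lam eps q Q =
     eps powi ((int (p*d) * int n * (int p - 1)) div 2 - int d * int (alpha_comp p b))
     * q powi (qexp p d b lam)
     * (\<Prod>i=1..d. Q i) ^ (n * (p - 1))
     * (\<Prod>(i,j,s)\<in>cells lam {1..p*d}.
          \<Prod>t\<in>{t\<in>{1..p*d}. pidx d t \<noteq> pidx d s}. (hlam eps q Q d lam i j s t - 1))"

definition gamma_lam :: "nat \<Rightarrow> nat \<Rightarrow> (nat \<Rightarrow> nat) \<Rightarrow> (nat \<Rightarrow> nat list) \<Rightarrow> rat" where
  "gamma_lam p d b lam = of_int (qexp p d b lam) / of_nat (plam p d lam)"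

definition alpha_lam :: "nat \<Rightarrow> nat \<Rightarrow> nat \<Rightarrow> (nat \<Rightarrow> nat) \<Rightarrow> (nat \<Rightarrow> nat list) \<Rightarrow> rat" where
  "alpha_lam p d n b lam =
     of_nat (nlam p d n lam) * (of_nat (p*d*p) - of_nat (d * olam p d lam)) / 2
     - of_nat (d * alpha_comp p b) / of_nat (plam p d lam)"

text \<open>g_lambda (the rational exponents are integers by the theorem; floor is then exact)\<close>
definition g_lam :: "nat \<Rightarrow> nat \<Rightarrow> nat \<Rightarrow> (nat \<Rightarrow> nat) \<Rightarrow> (nat \<Rightarrow> nat list)
    \<Rightarrow> complex \<Rightarrow> complex \<Rightarrow> (nat \<Rightarrow> complex) \<Rightarrow> complex" where
  "g_lam p d n b lam eps q Q =
     (let ol = olam p d lam; pl = plam p d lam; nl = nlam p d n lam in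
     eps powi \<lfloor>alpha_lam p d n b lam\<rfloor> * q powi \<lfloor>gamma_lam p d b lam\<rfloor>
     * (\<Prod>i=1..d. Q i) ^ (nl * (p - 1))
     * (\<Prod>(i,j,s)\<in>cells lam {1..d*ol}. \<Prod>t\<in>{1..d*ol}.
          \<Prod>a\<in>{a. a < pl \<and> (pidx d t = pidx d s \<longrightarrow> a \<noteq> 0)}.
            (eps ^ (a * ol) * hlam eps q Q d lam i j s t - 1)))"

text \<open>membership in Z[eps, q^{+-1}, Q_1^{+-1}, ..., Q_d^{+-1}] for a function of (q,Q)
  (eps fixed): a fixed integer combination of monomials agreeing with it for all
  nonzero q, Q\<close>
definition in_Zring :: "nat \<Rightarrow> complex \<Rightarrow> (complex \<Rightarrow> (nat \<Rightarrow> complex) \<Rightarrow> complex) \<Rightarrow> bool" where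
  "in_Zring d eps G \<longleftrightarrow> (\<exists>S :: (nat \<times> int \<times> int list) set. \<exists>c :: nat \<times> int \<times> int list \<Rightarrow> int.
      finite S \<and> (\<forall>(e,k,v)\<in>S. length v = d) \<and>
      (\<forall>q Q. q \<noteq> 0 \<and> (\<forall>i\<in>{1..d}. Q i \<noteq> 0) \<longrightarrow>
         G q Q = (\<Sum>(e,k,v)\<in>S. of_int (c (e,k,v)) * eps ^ e * q powi k
                     * (\<Prod>i<d. Q (i+1) powi (v ! i)))))"

end

theory Submission
  imports Defs "HOL-Library.Multiset"
begin


definition mon :: "complex \<Rightarrow> complex \<Rightarrow> (nat\<Rightarrow>complex) \<Rightarrow> nat \<Rightarrow> nat\<times>int\<times>int list \<Rightarrow> complex" where
  "mon eps q Q d x = eps ^ fst x * q powi fst (snd x) * (\<Prod>i<d. Q (i+1) powi (snd (snd x) ! i))"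

definition nzq :: "nat \<Rightarrow> complex \<Rightarrow> (nat \<Rightarrow> complex) \<Rightarrow> bool" where
  "nzq d q Q \<longleftrightarrow> q \<noteq> 0 \<and> (\<forall>i\<in>{1..d}. Q i \<noteq> 0)"

lemma in_Zring_iff: "in_Zring d eps G \<longleftrightarrow> (\<exists>S c. finite S \<and> (\<forall>x\<in>S. length (snd (snd x)) = d) \<and>
   (\<forall>q Q. nzq d q Q \<longrightarrow> G q Q = (\<Sum>x\<in>S. of_int (c x) * mon eps q Q d x)))"
  unfolding in_Zring_def nzq_def mon_def
  by (simp add: split_def mult.assoc)

lemma Zr_cong: "in_Zring d eps F \<Longrightarrow> (\<And>q Q. nzq d q Q \<Longrightarrow> G q Q = F q Q) \<Longrightarrow> in_Zring d eps G"
  unfolding in_Zring_iff by metis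

lemma Zr_mon: "length v = d \<Longrightarrow> in_Zring d eps (\<lambda>q Q. mon eps q Q d (e,k,v))"
  unfolding in_Zring_iff
  by (rule exI[of _ "{(e,k,v)}"], rule exI[of _ "\<lambda>_. 1"]) simp

lemma mon_zero: "mon eps q Q d (e,k,replicate d 0) = eps^e * q powi k"
  by (simp add: mon_def)

lemma Zr_epsq: "in_Zring d eps (\<lambda>q Q. eps^e * q powi k)"
  by (rule Zr_cong[OF Zr_mon[of "replicate d 0" d eps e k]]) (auto simp: mon_zero)

lemma Zr_one: "in_Zring d eps (\<lambda>q Q. 1)"
  by (rule Zr_cong[OF Zr_epsq[of d eps 0 0]]) simp

lemma Zr_Q: assumes "i \<in> {1..d}" shows "in_Zring d eps (\<lambda>q Q. Q i powi z)"
proof (rule Zr_cong[OF Zr_mon[of "(replicate d 0)[i-1 := z]" d eps 0 0]])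
  show "length ((replicate d 0)[i-1 := z]) = d" by simp
  fix q :: complex and Q :: "nat \<Rightarrow> complex"
  have "(\<Prod>l<d. Q (l+1) powi (((replicate d 0)[i-1 := z]) ! l)) = (\<Prod>l<d. if l = i - 1 then Q (l+1) powi z else 1)"
    by (rule prod.cong) (auto simp: nth_list_update)
  also have "\<dots> = Q i powi z" using assms by (simp, arith)
  finally show "Q i powi z = mon eps q Q d (0, 0, (replicate d 0)[i - 1 := z])"
    by (simp add: mon_def)
qed

definition addm :: "nat\<times>int\<times>int list \<Rightarrow> nat\<times>int\<times>int list \<Rightarrow> nat\<times>int\<times>int list" where
  "addm x y = (fst x + fst y, fst (snd x) + fst (snd y), map (\<lambda>(a,b). a+b) (zip (snd (snd x)) (snd (snd y))))"

lemma mon_addm: assumes "nzq d q Q" "length (snd (snd x)) = d" "length (snd (snd y)) = d"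
  shows "mon eps q Q d (addm x y) = mon eps q Q d x * mon eps q Q d y"
proof -
  have q: "q \<noteq> 0" and QQ: "\<And>l. l < d \<Longrightarrow> Q (l+1) \<noteq> 0" using assms(1) by (auto simp: nzq_def)
  have "(\<Prod>l<d. Q (l+1) powi (snd (snd (addm x y)) ! l)) =
      (\<Prod>l<d. Q (l+1) powi (snd (snd x) ! l) * Q (l+1) powi (snd (snd y) ! l))"
    by (rule prod.cong) (use assms QQ in \<open>auto simp: addm_def power_int_add\<close>)
  then show ?thesis using q
    by (simp add: mon_def addm_def power_add power_int_add prod.distrib algebra_simps)
qed

lemma Zr_mult: assumes "in_Zring d eps F" "in_Zring d eps G"
  shows "in_Zring d eps (\<lambda>q Q. F q Q * G q Q)"
proof -
  obtain S1 c1 where S1: "finite S1" "\<forall>x\<in>S1. length (snd (snd x)) = d"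
    "\<And>q Q. nzq d q Q \<Longrightarrow> F q Q = (\<Sum>x\<in>S1. of_int (c1 x) * mon eps q Q d x)"
    using assms(1) unfolding in_Zring_iff by blast
  obtain S2 c2 where S2: "finite S2" "\<forall>x\<in>S2. length (snd (snd x)) = d"
    "\<And>q Q. nzq d q Q \<Longrightarrow> G q Q = (\<Sum>x\<in>S2. of_int (c2 x) * mon eps q Q d x)"
    using assms(2) unfolding in_Zring_iff by blast
  define h where "h = (\<lambda>z. addm (fst z) (snd z))"
  define S where "S = h ` (S1 \<times> S2)"
  define c where "c = (\<lambda>w. \<Sum>z\<in>{z. z \<in> S1 \<times> S2 \<and> h z = w}. c1 (fst z) * c2 (snd z))"
  have fin: "finite (S1 \<times> S2)" using S1 S2 by auto
  show ?thesis unfolding in_Zring_iff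
  proof (intro exI conjI allI impI)
    show "finite S" using fin by (simp add: S_def)
    show "\<forall>x\<in>S. length (snd (snd x)) = d" using S1 S2 by (auto simp: S_def h_def addm_def)
    fix q Q assume nz: "nzq d q Q"
    have "F q Q * G q Q = (\<Sum>x\<in>S1. \<Sum>y\<in>S2. of_int (c1 x) * mon eps q Q d x * (of_int (c2 y) * mon eps q Q d y))"
      by (simp add: S1(3)[OF nz] S2(3)[OF nz] sum_product)
    also have "\<dots> = (\<Sum>z\<in>S1 \<times> S2. of_int (c1 (fst z) * c2 (snd z)) * mon eps q Q d (h z))"
      unfolding sum.cartesian_product
    proof (rule sum.cong[OF refl])
      fix z assume z: "z \<in> S1 \<times> S2"
      then obtain x y where xy: "z = (x,y)" "x \<in> S1" "y \<in> S2" by auto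
      then have l: "length (snd (snd x)) = d" "length (snd (snd y)) = d" using S1(2) S2(2) by auto
      show "(case z of (x,y) \<Rightarrow> of_int (c1 x) * mon eps q Q d x * (of_int (c2 y) * mon eps q Q d y)) =
         of_int (c1 (fst z) * c2 (snd z)) * mon eps q Q d (h z)"
        unfolding xy h_def using mon_addm[OF nz l] by simp
    qed
    also have "\<dots> = (\<Sum>w\<in>S. \<Sum>z\<in>{z. z \<in> S1 \<times> S2 \<and> h z = w}. of_int (c1 (fst z) * c2 (snd z)) * mon eps q Q d (h z))"
      unfolding S_def by (rule sum.image_gen[OF fin])
    also have "\<dots> = (\<Sum>w\<in>S. of_int (c w) * mon eps q Q d w)"
      unfolding c_def of_int_sum sum_distrib_right
      by (rule sum.cong[OF refl], rule sum.cong[OF refl]) auto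
    finally show "F q Q * G q Q = (\<Sum>w\<in>S. of_int (c w) * mon eps q Q d w)" .
  qed
qed

lemma Zr_diff: assumes "in_Zring d eps F" "in_Zring d eps G"
  shows "in_Zring d eps (\<lambda>q Q. F q Q - G q Q)"
proof -
  obtain S1 c1 where S1: "finite S1" "\<forall>x\<in>S1. length (snd (snd x)) = d"
    "\<And>q Q. nzq d q Q \<Longrightarrow> F q Q = (\<Sum>x\<in>S1. of_int (c1 x) * mon eps q Q d x)"
    using assms(1) unfolding in_Zring_iff by blast
  obtain S2 c2 where S2: "finite S2" "\<forall>x\<in>S2. length (snd (snd x)) = d"
    "\<And>q Q. nzq d q Q \<Longrightarrow> G q Q = (\<Sum>x\<in>S2. of_int (c2 x) * mon eps q Q d x)"
    using assms(2) unfolding in_Zring_iff by blast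
  define c where "c = (\<lambda>x. (if x \<in> S1 then c1 x else 0) - (if x \<in> S2 then c2 x else 0))"
  show ?thesis unfolding in_Zring_iff
  proof (intro exI[of _ "S1 \<union> S2"] exI[of _ c] conjI allI impI)
    show "finite (S1 \<union> S2)" using S1 S2 by auto
    show "\<forall>x\<in>S1 \<union> S2. length (snd (snd x)) = d" using S1 S2 by auto
    fix q Q assume nz: "nzq d q Q"
    have e1: "(\<Sum>x\<in>S1 \<union> S2. (if x \<in> S1 then of_int (c1 x) * mon eps q Q d x else 0)) = (\<Sum>x\<in>S1. of_int (c1 x) * mon eps q Q d x)"
      using S1 S2 sum.inter_restrict[of "S1 \<union> S2" "\<lambda>x. of_int (c1 x) * mon eps q Q d x" "S1"] by (simp add: Int_absorb1)
    have e2: "(\<Sum>x\<in>S1 \<union> S2. (if x \<in> S2 then of_int (c2 x) * mon eps q Q d x else 0)) = (\<Sum>x\<in>S2. of_int (c2 x) * mon eps q Q d x)"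
      using S1 S2 sum.inter_restrict[of "S1 \<union> S2" "\<lambda>x. of_int (c2 x) * mon eps q Q d x" "S2"] by (simp add: Int_absorb1)
    have "(\<Sum>x\<in>S1 \<union> S2. of_int (c x) * mon eps q Q d x) =
       (\<Sum>x\<in>S1 \<union> S2. (if x \<in> S1 then of_int (c1 x) * mon eps q Q d x else 0) - (if x \<in> S2 then of_int (c2 x) * mon eps q Q d x else 0))"
      by (rule sum.cong) (auto simp: c_def algebra_simps)
    also have "\<dots> = F q Q - G q Q" unfolding sum_subtractf e1 e2 S1(3)[OF nz] S2(3)[OF nz] ..
    finally show "F q Q - G q Q = (\<Sum>x\<in>S1 \<union> S2. of_int (c x) * mon eps q Q d x)" by simp
  qed
qed

lemma Zr_prod: assumes "\<And>x. x \<in> A \<Longrightarrow> in_Zring d eps (F x)"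
  shows "in_Zring d eps (\<lambda>q Q. \<Prod>x\<in>A. F x q Q)"
proof (cases "finite A")
  case True
  then show ?thesis using assms
  proof (induction A rule: finite_induct)
    case empty then show ?case by (simp add: Zr_one)
  next
    case (insert x A)
    have "in_Zring d eps (\<lambda>q Q. F x q Q * (\<Prod>x\<in>A. F x q Q))"
      by (rule Zr_mult) (use insert in auto)
    then show ?case using insert by simp
  qed
next
  case False then show ?thesis by (simp add: Zr_one)
qed

lemma Zr_power: "in_Zring d eps F \<Longrightarrow> in_Zring d eps (\<lambda>q Q. F q Q ^ N)"
  by (induction N) (simp_all add: Zr_one Zr_mult)

lemma eps_powi_nat: assumes "eps ^ p = (1::complex)" "p > 0"
  shows "eps powi k = eps ^ nat (k mod int p)"
proof -
  have nz: "eps \<noteq> 0" using assms by (metis power_0_left less_not_refl2 zero_neq_one)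
  have "eps powi k = eps powi (k mod int p + int p * (k div int p))" by simp
  also have "\<dots> = eps powi (k mod int p) * (eps powi int p) powi (k div int p)"
    using nz by (simp only: power_int_add[OF disjI1[OF nz]] power_int_mult)
  also have "\<dots> = eps ^ nat (k mod int p)" using assms nz by (simp add: power_int_nonneg_exp)
  finally show ?thesis .
qed

lemma Zr_hlam: assumes "eps ^ p = (1::complex)" "p > 0" "d \<ge> 1"
  shows "in_Zring d eps (\<lambda>q Q. eps ^ e * hlam eps q Q d lam i j s t - 1)"
proof -
  have ds: "didx d s \<in> {1..d}" "didx d t \<in> {1..d}" using assms(3) by (auto simp: didx_def Suc_le_eq)
  have "in_Zring d eps (\<lambda>q Q. (eps ^ (e + nat ((int (pidx d s) - int (pidx d t)) mod int p)) * q powi hook (lam s) (lam t) i j)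
       * Q (didx d s) powi 1 * Q (didx d t) powi (-1) - 1)"
    by (intro Zr_diff Zr_mult Zr_epsq Zr_Q Zr_one ds)
  then show ?thesis
    by (rule Zr_cong) (simp add: hlam_def eps_powi_nat[OF assms(1,2)] power_add divide_inverse power_int_minus algebra_simps)
qed

lemma Zr_epsi: assumes "eps ^ p = (1::complex)" "p > 0" shows "in_Zring d eps (\<lambda>q Q. eps powi k)"
  by (rule Zr_cong[OF Zr_epsq[of d eps "nat (k mod int p)" 0]]) (simp add: eps_powi_nat[OF assms])

lemma Zr_qpowi: "in_Zring d eps (\<lambda>q Q. q powi k)"
  by (rule Zr_cong[OF Zr_epsq[of d eps 0 k]]) simp

lemma Zr_Q1: "i \<in> {1..d} \<Longrightarrow> in_Zring d eps (\<lambda>q Q. Q i)"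
  by (rule Zr_cong[OF Zr_Q[of i d eps 1]]) simp_all

lemma Zr_g: assumes "eps ^ p = (1::complex)" "p > 0" "d \<ge> 1"
  shows "in_Zring d eps (g_lam p d n b lam eps)"
proof -
  have "in_Zring d eps (\<lambda>q Q. eps powi \<lfloor>alpha_lam p d n b lam\<rfloor> * q powi \<lfloor>gamma_lam p d b lam\<rfloor>
     * (\<Prod>i=1..d. Q i) ^ (nlam p d n lam * (p - 1))
     * (\<Prod>x\<in>cells lam {1..d*olam p d lam}. case x of (i,j,s) \<Rightarrow> \<Prod>t\<in>{1..d*olam p d lam}.
          \<Prod>a\<in>{a. a < plam p d lam \<and> (pidx d t = pidx d s \<longrightarrow> a \<noteq> 0)}.
            (eps ^ (a * olam p d lam) * hlam eps q Q d lam i j s t - 1)))"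
    apply (intro Zr_mult Zr_epsi[OF assms(1,2)] Zr_qpowi Zr_power Zr_prod Zr_Q1)
     apply simp
    apply (clarsimp split: prod.splits)
    apply (intro Zr_prod Zr_hlam[OF assms])
    done
  then show ?thesis unfolding g_lam_def Let_def by (simp add: split_def)
qed



lemma prod_regroup: "(\<Prod>s\<in>{1..k*m}. (f::nat \<Rightarrow> 'a::comm_monoid_mult) s) = (\<Prod>c<m. \<Prod>s\<in>{1..k}. f (s + k*c))"
proof (induction m)
  case 0 then show ?case by simp
next
  case (Suc m)
  have "{1..k*Suc m} = {1..k*m} \<union> {1+k*m..k+k*m}" by auto
  then have "(\<Prod>s\<in>{1..k*Suc m}. f s) = (\<Prod>s\<in>{1..k*m}. f s) * (\<Prod>s\<in>{1+k*m..k+k*m}. f s)"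
    by (simp add: prod.union_disjoint ivl_disj_int)
  also have "(\<Prod>s\<in>{1+k*m..k+k*m}. f s) = (\<Prod>s\<in>{1..k}. f (s + k*m))"
    by (rule prod.shift_bounds_cl_nat_ivl)
  finally show ?case using Suc by simp
qed

lemma sum_regroup: "(\<Sum>s\<in>{1..k*m}. (f::nat \<Rightarrow> 'a::comm_monoid_add) s) = (\<Sum>c<m. \<Sum>s\<in>{1..k}. f (s + k*c))"
proof (induction m)
  case 0 then show ?case by simp
next
  case (Suc m)
  have "{1..k*Suc m} = {1..k*m} \<union> {1+k*m..k+k*m}" by auto
  then have "(\<Sum>s\<in>{1..k*Suc m}. f s) = (\<Sum>s\<in>{1..k*m}. f s) + (\<Sum>s\<in>{1+k*m..k+k*m}. f s)"
    by (simp add: sum.union_disjoint ivl_disj_int)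
  also have "(\<Sum>s\<in>{1+k*m..k+k*m}. f s) = (\<Sum>s\<in>{1..k}. f (s + k*m))"
    by (rule sum.shift_bounds_cl_nat_ivl)
  finally show ?case using Suc by simp
qed

lemma blk_p: "t \<ge> 1 \<Longrightarrow> blk p d lam (p + t) = blk p d lam t"
proof -
  assume "t \<ge> 1"
  then have "(p + t - 1) mod p = (t - 1) mod p"
    by (metis Nat.add_diff_assoc add.commute mod_add_self2)
  then show ?thesis by (simp add: blk_def)
qed

lemma per_mult: assumes "\<forall>t\<ge>1. blk p d lam (ok + t) = blk p d lam t"
  shows "t \<ge> 1 \<Longrightarrow> blk p d lam (ok*c + t) = blk p d lam t"
proof (induction c)
  case 0 then show ?case by simp
next
  case (Suc c)
  have "blk p d lam (ok * Suc c + t) = blk p d lam (ok + (ok*c + t))" by (simp add: algebra_simps)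
  also have "\<dots> = blk p d lam (ok*c + t)" using assms Suc by simp
  finally show ?case using Suc by simp
qed

lemma olam_props: assumes "p > 0"
  shows "1 \<le> olam p d lam" "olam p d lam dvd p"
    "\<forall>t\<ge>1. blk p d lam (olam p d lam + t) = blk p d lam t"
proof -
  define P where "P = (\<lambda>k. 1 \<le> k \<and> (\<forall>t\<ge>1. blk p d lam (k + t) = blk p d lam t))"
  have Pp: "P p" using assms blk_p by (simp add: P_def)
  have o: "P (olam p d lam)" unfolding olam_def P_def[symmetric] by (rule LeastI[of P, OF Pp])
  then show "1 \<le> olam p d lam" "\<forall>t\<ge>1. blk p d lam (olam p d lam + t) = blk p d lam t" by (auto simp: P_def)
  have min: "\<And>k. P k \<Longrightarrow> olam p d lam \<le> k" unfolding olam_def P_def[symmetric] by (rule Least_le)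
  let ?o = "olam p d lam"
  show "?o dvd p"
  proof (rule ccontr)
    assume nd: "\<not> ?o dvd p"
    let ?r = "p mod ?o"
    have r0: "?r \<ge> 1" using nd by (simp add: dvd_eq_mod_eq_0)
    have "P ?r"
    proof -
      have "blk p d lam (?r + t) = blk p d lam t" if "t \<ge> 1" for t
      proof -
        have "blk p d lam (?r + t) = blk p d lam (?o * (p div ?o) + (?r + t))"
          using per_mult[of p d lam ?o "?r + t" "p div ?o"] o that by (simp add: P_def)
        also have "?o * (p div ?o) + (?r + t) = p + t" by simp
        finally show ?thesis using blk_p that by simp
      qed
      then show ?thesis using r0 by (simp add: P_def)
    qed
    then have "?o \<le> ?r" by (rule min)
    moreover have "?r < ?o" using o by (simp add: P_def)
    ultimately show False by simp
  qed
qed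

lemma lam_period: assumes "d \<ge> 1" "\<forall>t\<ge>1. blk p d lam (ok + t) = blk p d lam t" "1 \<le> s" "s + d*ok \<le> p*d"
  shows "lam (s + d*ok) = lam s"
proof -
  define t where "t = (s - 1) div d + 1"
  define k where "k = (s - 1) mod d"
  have kd: "k < d" using assms(1) by (simp add: k_def)
  have nth: "blk p d lam u ! k = lam (d * ((u - 1) mod p) + (k + 1))" for u
    using kd by (simp add: blk_def nth_map del: upt_Suc)
  have sd: "s - 1 = d * (t - 1) + k" by (simp add: t_def k_def)
  have lt: "(s - 1 + d*ok) div d < p" using assms by (simp add: less_mult_imp_div_less mult.commute)
  have e1: "(s - 1 + d*ok) div d = t - 1 + ok" using assms(1) by (simp add: t_def)
  have m1: "(t - 1) mod p = t - 1" using lt e1 by simp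
  have m2: "(ok + t - 1) mod p = ok + t - 1" using lt e1 by (simp add: t_def)
  have s_eq: "s = d*(t-1) + (k + 1)" using sd assms(3) by linarith
  have "lam s = lam (d*((t-1) mod p) + (k+1))" using m1 s_eq by simp
  also have "\<dots> = blk p d lam t ! k" using nth[of t] by simp
  also have "\<dots> = blk p d lam (ok + t) ! k" using assms(2) t_def by (metis le_add2)
  also have "\<dots> = lam (d * ((ok + t - 1) mod p) + (k + 1))" using nth[of "ok + t"] by simp
  also have "d * ((ok + t - 1) mod p) + (k + 1) = s + d*ok"
  proof -
    have "t \<ge> 1" by (simp add: t_def)
    then obtain t' where t': "t = Suc t'" by (cases t) auto
    show ?thesis unfolding m2 using s_eq unfolding t' by (simp add: algebra_simps)
  qed
  finally show ?thesis by simp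
qed

lemma lam_period_mult: assumes "d \<ge> 1" "\<forall>t\<ge>1. blk p d lam (ok + t) = blk p d lam t"
  shows "1 \<le> s \<Longrightarrow> s + d*ok*c \<le> p*d \<Longrightarrow> lam (s + d*ok*c) = lam s"
proof (induction c)
  case 0 then show ?case by simp
next
  case (Suc c)
  have "lam (s + d*ok*Suc c) = lam ((s + d*ok*c) + d*ok)" by (simp add: algebra_simps)
  also have "\<dots> = lam (s + d*ok*c)"
    by (rule lam_period[OF assms]) (use Suc.prems in \<open>auto simp: algebra_simps\<close>)
  finally show ?case using Suc by simp
qed

lemma prod_shift_periodic: fixes c pl :: nat and G :: "nat \<Rightarrow> 'a::comm_monoid_mult" assumes "\<And>a. G (a + pl) = G a"
  shows "(\<Prod>x<pl. G (c + x)) = (\<Prod>x<pl. (G x :: 'a::comm_monoid_mult))"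
proof (induction c)
  case 0 then show ?case by simp
next
  case (Suc c)
  show ?case
  proof (cases pl)
    case 0 then show ?thesis by simp
  next
    case (Suc k)
    have "(\<Prod>x<pl. G (Suc c + x)) = (\<Prod>x<k. G (c + Suc x)) * G (c + pl)"
      using Suc by (simp add: prod.lessThan_Suc)
    also have "G (c + pl) = G c" using assms by simp
    also have "(\<Prod>x<k. G (c + Suc x)) * G c = (\<Prod>x<pl. G (c + x))"
      using prod.lessThan_Suc_shift[of "\<lambda>x. G (c + x)" k] Suc by (simp add: mult.commute)
    finally show ?thesis using Suc.IH by simp
  qed
qed

lemma prod_refl_periodic: fixes c pl :: nat and G :: "nat \<Rightarrow> 'a::comm_monoid_mult" assumes "\<And>a. G (a + pl) = G a"
  shows "(\<Prod>e<pl. G (c + pl - e)) = (\<Prod>x<pl. (G x :: 'a::comm_monoid_mult))"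
proof -
  have "(\<Prod>e<pl. G (c + pl - e)) = (\<Prod>e<pl. (\<lambda>x. G (Suc c + x)) (pl - Suc e))"
    by (rule prod.cong[OF refl], rule arg_cong[where f=G]) auto
  also have "\<dots> = (\<Prod>x<pl. G (Suc c + x))" by (rule prod.nat_diff_reindex)
  also have "\<dots> = (\<Prod>x<pl. G x)" using prod_shift_periodic[of G pl "Suc c"] assms by blast
  finally show ?thesis .
qed



lemma pidx_shift: "d \<ge> 1 \<Longrightarrow> s \<ge> 1 \<Longrightarrow> pidx d (s + d*m) = pidx d s + m"
proof -
  assume a: "d \<ge> 1" "s \<ge> 1"
  obtain s' where s': "s = Suc s'" using a by (cases s) auto
  show ?thesis unfolding pidx_def s' using a by simp
qed

lemma didx_shift: "d \<ge> 1 \<Longrightarrow> s \<ge> 1 \<Longrightarrow> didx d (s + d*m) = didx d s"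
proof -
  assume a: "d \<ge> 1" "s \<ge> 1"
  obtain s' where s': "s = Suc s'" using a by (cases s) auto
  show ?thesis unfolding didx_def s' using a by simp
qed

lemma hlam_shift:
  assumes "d \<ge> 1" "eps \<noteq> 0" "eps ^ (ok*pl) = 1" "s \<ge> 1" "t \<ge> 1" "e < pl"
    "lam (s + d*ok*c) = lam s" "lam (t + d*ok*e) = lam t"
  shows "hlam eps q Q d lam i j (s + d*ok*c) (t + d*ok*e) = eps ^ ((c+pl-e)*ok) * hlam eps q Q d lam i j s t"
proof -
  have ps: "pidx d (s + d*ok*c) = pidx d s + ok*c" using pidx_shift[OF assms(1,4), of "ok*c"] by (simp add: mult.assoc)
  have pt: "pidx d (t + d*ok*e) = pidx d t + ok*e" using pidx_shift[OF assms(1,5), of "ok*e"] by (simp add: mult.assoc)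
  have ds: "didx d (s + d*ok*c) = didx d s" using didx_shift[OF assms(1,4), of "ok*c"] by (simp add: mult.assoc)
  have dt: "didx d (t + d*ok*e) = didx d t" using didx_shift[OF assms(1,5), of "ok*e"] by (simp add: mult.assoc)
  have X0: "int (c+pl-e) = int c + int pl - int e" using assms(6) by simp
  have X: "int ((c+pl-e)*ok) = int ok*(int c - int e) + int (ok*pl)"
    unfolding of_nat_mult X0 by (simp add: algebra_simps)
  have E: "eps ^ ((c+pl-e)*ok) = eps powi (int ok*(int c - int e))"
  proof -
    have "eps ^ ((c+pl-e)*ok) = eps powi (int ((c+pl-e)*ok))" by (simp only: power_int_of_nat)
    also have "\<dots> = eps powi (int ok*(int c - int e)) * eps powi (int (ok*pl))"
      unfolding X by (simp only: power_int_add[OF disjI1[OF assms(2)]])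
    also have "eps powi (int (ok*pl)) = 1" using assms(3) by (simp only: power_int_of_nat)
    also have "eps powi (int ok*(int c - int e)) * 1 = eps powi (int ok*(int c - int e))" by simp
    finally show ?thesis .
  qed
  have "eps powi (int (pidx d s + ok*c) - int (pidx d t + ok*e)) = eps powi ((int (pidx d s) - int (pidx d t)) + int ok*(int c - int e))"
    by (simp add: algebra_simps)
  also have "\<dots> = eps powi (int (pidx d s) - int (pidx d t)) * eps ^ ((c+pl-e)*ok)"
    unfolding E by (simp only: power_int_add[OF disjI1[OF assms(2)]])
  finally have "eps powi (int (pidx d s + ok*c) - int (pidx d t + ok*e)) = eps powi (int (pidx d s) - int (pidx d t)) * eps ^ ((c+pl-e)*ok)" .
  then show ?thesis unfolding hlam_def ps pt ds dt assms(7,8) by (simp add: algebra_simps)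
qed

lemma pidx_range: "d \<ge> 1 \<Longrightarrow> t \<in> {1..d*ok} \<Longrightarrow> pidx d t \<ge> 1 \<and> pidx d t \<le> ok"
  by (auto simp: pidx_def less_mult_imp_div_less Suc_le_eq mult.commute)

lemma eq_divmod: fixes x y ok :: nat assumes "x < ok" "y < ok" shows "x + ok*e = y + ok*c \<longleftrightarrow> x = y \<and> e = c"
proof
  assume h: "x + ok*e = y + ok*c"
  have "(x + ok*e) mod ok = x" "(y + ok*c) mod ok = y" using assms by auto
  moreover have "(x + ok*e) div ok = e" "(y + ok*c) div ok = c" using assms by auto
  ultimately show "x = y \<and> e = c" using h by metis
qed auto

lemma dvd_refl_iff: fixes c e pl :: nat assumes "c < pl" "e < pl" shows "pl dvd (c + pl - e) \<longleftrightarrow> e = c"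
proof (cases "e \<le> c")
  case True
  then have "c + pl - e = (c - e) + pl" by simp
  then have "pl dvd (c + pl - e) \<longleftrightarrow> pl dvd (c - e)" by simp
  also have "\<dots> \<longleftrightarrow> c - e = 0" using assms by (auto dest: dvd_imp_le)
  finally show ?thesis using True by auto
next
  case False
  then have "0 < c + pl - e" "c + pl - e < pl" using assms by auto
  then show ?thesis using False by (auto dest: dvd_imp_le)
qed

lemma inner_prod:
  assumes d: "d \<ge> 1" and pl: "pl \<ge> 1" and nz: "eps \<noteq> 0" and ep: "eps ^ (ok*pl) = 1"
    and per: "\<forall>s c. 1 \<le> s \<longrightarrow> s \<le> d*ok \<longrightarrow> c < pl \<longrightarrow> lam (s + d*ok*c) = lam s"
    and s: "s \<in> {1..d*ok}" and c: "c < pl"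
  shows "(\<Prod>t\<in>{t\<in>{1..d*ok*pl}. pidx d t \<noteq> pidx d (s + d*ok*c)}. hlam eps q Q d lam i j (s + d*ok*c) t - 1)
    = (\<Prod>t\<in>{1..d*ok}. \<Prod>a\<in>{a. a < pl \<and> (pidx d t = pidx d s \<longrightarrow> a \<noteq> 0)}.
          (eps ^ (a*ok) * hlam eps q Q d lam i j s t - 1))"
proof -
  let ?H = "\<lambda>t. hlam eps q Q d lam i j (s + d*ok*c) t - 1"
  let ?P = "\<lambda>t. pidx d t \<noteq> pidx d (s + d*ok*c)"
  have "(\<Prod>t\<in>{t\<in>{1..d*ok*pl}. ?P t}. ?H t) = (\<Prod>t\<in>{1..d*ok*pl}. if ?P t then ?H t else 1)"
    by (rule prod.inter_filter) simp
  also have "\<dots> = (\<Prod>e<pl. \<Prod>t\<in>{1..d*ok}. if ?P (t + d*ok*e) then ?H (t + d*ok*e) else 1)"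
    by (rule prod_regroup)
  also have "\<dots> = (\<Prod>t\<in>{1..d*ok}. \<Prod>e<pl. if ?P (t + d*ok*e) then ?H (t + d*ok*e) else 1)"
    by (rule prod.swap)
  also have "\<dots> = (\<Prod>t\<in>{1..d*ok}. \<Prod>a\<in>{a. a < pl \<and> (pidx d t = pidx d s \<longrightarrow> a \<noteq> 0)}.
          (eps ^ (a*ok) * hlam eps q Q d lam i j s t - 1))"
  proof (rule prod.cong[OF refl])
    fix t assume t: "t \<in> {1..d*ok}"
    define G where "G = (\<lambda>a. if (pidx d t = pidx d s \<longrightarrow> \<not> pl dvd a) then eps ^ (a*ok) * hlam eps q Q d lam i j s t - 1 else 1)"
    have Gp: "G (a + pl) = G a" for a
    proof -
      have "eps ^ ((a + pl)*ok) = eps ^ (a*ok)" using ep by (simp add: algebra_simps power_add)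
      then show ?thesis by (simp add: G_def)
    qed
    have rs: "pidx d s \<ge> 1 \<and> pidx d s \<le> ok" "pidx d t \<ge> 1 \<and> pidx d t \<le> ok" using pidx_range[OF d] s t by auto
    have "(\<Prod>e<pl. if ?P (t + d*ok*e) then ?H (t + d*ok*e) else 1) = (\<Prod>e<pl. G (c + pl - e))"
    proof (rule prod.cong[OF refl])
      fix e assume e: "e \<in> {..<pl}"
      have pe: "pidx d (t + d*ok*e) = pidx d t + ok*e" "pidx d (s + d*ok*c) = pidx d s + ok*c"
        using pidx_shift[OF d, of t "ok*e"] pidx_shift[OF d, of s "ok*c"] s t by (auto simp: mult.assoc)
      have "pidx d t + ok*e = pidx d s + ok*c \<longleftrightarrow> (pidx d t - 1) + ok*e = (pidx d s - 1) + ok*c" using rs by auto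
      also have "\<dots> \<longleftrightarrow> pidx d t - 1 = pidx d s - 1 \<and> e = c" by (rule eq_divmod) (use rs in auto)
      also have "\<dots> \<longleftrightarrow> pidx d t = pidx d s \<and> pl dvd (c + pl - e)" using rs dvd_refl_iff[OF c, of e] e by auto
      finally have cond: "?P (t + d*ok*e) \<longleftrightarrow> (pidx d t = pidx d s \<longrightarrow> \<not> pl dvd (c + pl - e))" unfolding pe by auto
      have hs: "hlam eps q Q d lam i j (s + d*ok*c) (t + d*ok*e) = eps ^ ((c+pl-e)*ok) * hlam eps q Q d lam i j s t"
        by (rule hlam_shift[OF d nz ep]) (use s t e c per in auto)
      show "(if ?P (t + d*ok*e) then ?H (t + d*ok*e) else 1) = G (c + pl - e)"
        unfolding G_def cond hs by simp
    qed
    also have "\<dots> = (\<Prod>a<pl. G a)" using prod_refl_periodic[of G pl c] Gp by blast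
    also have "\<dots> = (\<Prod>a\<in>{a\<in>{..<pl}. pidx d t = pidx d s \<longrightarrow> a \<noteq> 0}. eps ^ (a*ok) * hlam eps q Q d lam i j s t - 1)"
      unfolding prod.inter_filter[OF finite_lessThan]
    proof (rule prod.cong[OF refl])
      fix a assume "a \<in> {..<pl}"
      then have "pl dvd a \<longleftrightarrow> a = 0" by (auto dest: dvd_imp_le)
      then show "G a = (if pidx d t = pidx d s \<longrightarrow> a \<noteq> 0 then eps ^ (a * ok) * hlam eps q Q d lam i j s t - 1 else 1)"
        by (simp add: G_def)
    qed
    also have "{a\<in>{..<pl}. pidx d t = pidx d s \<longrightarrow> a \<noteq> 0} = {a. a < pl \<and> (pidx d t = pidx d s \<longrightarrow> a \<noteq> 0)}" by auto
    finally show "(\<Prod>e<pl. if ?P (t + d*ok*e) then ?H (t + d*ok*e) else 1) = (\<Prod>a\<in>{a. a < pl \<and> (pidx d t = pidx d s \<longrightarrow> a \<noteq> 0)}.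
          (eps ^ (a*ok) * hlam eps q Q d lam i j s t - 1))" .
  qed
  finally show ?thesis .
qed

lemma cells_decomp:
  assumes d: "d \<ge> 1" and ok: "ok \<ge> 1"
    and per: "\<forall>s c. 1 \<le> s \<longrightarrow> s \<le> d*ok \<longrightarrow> c < pl \<longrightarrow> lam (s + d*ok*c) = lam s"
  defines "\<phi> \<equiv> (\<lambda>(x::nat\<times>nat\<times>nat, c::nat). (fst x, fst (snd x), snd (snd x) + d*ok*c))"
  shows "cells lam {1..d*ok*pl} = \<phi> ` (cells lam {1..d*ok} \<times> {..<pl})"
    "inj_on \<phi> (cells lam {1..d*ok} \<times> {..<pl})"
proof -
  have dk: "d*ok > 0" using d ok by simp
  show "inj_on \<phi> (cells lam {1..d*ok} \<times> {..<pl})"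
  proof (rule inj_onI)
    fix u v assume u: "u \<in> cells lam {1..d*ok} \<times> {..<pl}" and v: "v \<in> cells lam {1..d*ok} \<times> {..<pl}" and e: "\<phi> u = \<phi> v"
    obtain i j s c where uu: "u = ((i,j,s),c)" by (metis prod.collapse)
    obtain i' j' s' c' where vv: "v = ((i',j',s'),c')" by (metis prod.collapse)
    have r: "1 \<le> s" "s \<le> d*ok" "1 \<le> s'" "s' \<le> d*ok" using u v by (auto simp: uu vv cells_def)
    have "s + d*ok*c = s' + d*ok*c'" "i = i'" "j = j'" using e by (auto simp: uu vv \<phi>_def)
    then have "(s - 1) + (d*ok)*c = (s' - 1) + (d*ok)*c'" using r by (simp add: algebra_simps)
    then have "s - 1 = s' - 1 \<and> c = c'" by (subst (asm) eq_divmod) (use r in auto)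
    then show "u = v" using r \<open>i = i'\<close> \<open>j = j'\<close> by (auto simp: uu vv)
  qed
  show "cells lam {1..d*ok*pl} = \<phi> ` (cells lam {1..d*ok} \<times> {..<pl})"
  proof
    show "\<phi> ` (cells lam {1..d*ok} \<times> {..<pl}) \<subseteq> cells lam {1..d*ok*pl}"
    proof
      fix x assume "x \<in> \<phi> ` (cells lam {1..d*ok} \<times> {..<pl})"
      then obtain i j s c where h: "(i,j,s) \<in> cells lam {1..d*ok}" "c < pl" and xx: "x = \<phi> ((i,j,s),c)" by auto
      then have r: "1 \<le> s" "s \<le> d*ok" "1 \<le> i" "1 \<le> j" "j \<le> part (lam s) i" by (auto simp: cells_def)
      have "s + d*ok*c \<le> d*ok + d*ok*c" using r by simp
      also have "\<dots> = d*ok*(c+1)" by (simp add: algebra_simps)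
      also have "\<dots> \<le> d*ok*pl" using h(2) by (intro mult_le_mono2) simp
      finally show "x \<in> cells lam {1..d*ok*pl}"
        using r per h(2) xx by (auto simp: cells_def \<phi>_def)
    qed
    show "cells lam {1..d*ok*pl} \<subseteq> \<phi> ` (cells lam {1..d*ok} \<times> {..<pl})"
    proof
      fix x assume hx: "x \<in> cells lam {1..d*ok*pl}"
      obtain i j s' where xx: "x = (i,j,s')" by (metis prod_cases3)
      have h: "(i,j,s') \<in> cells lam {1..d*ok*pl}" using hx xx by simp
      then have r: "1 \<le> s'" "s' \<le> d*ok*pl" "1 \<le> i" "1 \<le> j" "j \<le> part (lam s') i" by (auto simp: cells_def)
      define c where "c = (s' - 1) div (d*ok)"
      define s where "s = (s' - 1) mod (d*ok) + 1"
      have ss: "s' = s + d*ok*c" using r by (simp add: s_def c_def)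
      have sr: "1 \<le> s" "s \<le> d*ok" using dk by (auto simp: s_def Suc_le_eq)
      have cp: "c < pl" using r dk by (simp add: c_def less_mult_imp_div_less mult.commute Suc_le_eq)
      have "lam s' = lam s" using per sr cp ss by auto
      then have "((i,j,s),c) \<in> cells lam {1..d*ok} \<times> {..<pl}" using r sr cp by (auto simp: cells_def)
      moreover have "(i,j,s') = \<phi> ((i,j,s),c)" using ss by (simp add: \<phi>_def)
      ultimately show "x \<in> \<phi> ` (cells lam {1..d*ok} \<times> {..<pl})" using xx by blast
    qed
  qed
qed

lemma prod_fold:
  assumes d: "d \<ge> 1" and ok: "ok \<ge> 1" and pl: "pl \<ge> 1" and nz: "eps \<noteq> 0" and ep: "eps ^ (ok*pl) = 1"
    and per: "\<forall>s c. 1 \<le> s \<longrightarrow> s \<le> d*ok \<longrightarrow> c < pl \<longrightarrow> lam (s + d*ok*c) = lam s"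
  shows "(\<Prod>(i,j,s)\<in>cells lam {1..d*ok*pl}. \<Prod>t\<in>{t\<in>{1..d*ok*pl}. pidx d t \<noteq> pidx d s}. hlam eps q Q d lam i j s t - 1)
    = (\<Prod>(i,j,s)\<in>cells lam {1..d*ok}. \<Prod>t\<in>{1..d*ok}. \<Prod>a\<in>{a. a < pl \<and> (pidx d t = pidx d s \<longrightarrow> a \<noteq> 0)}.
          (eps ^ (a*ok) * hlam eps q Q d lam i j s t - 1)) ^ pl"
proof -
  define \<phi> where "\<phi> = (\<lambda>(x::nat\<times>nat\<times>nat, c::nat). (fst x, fst (snd x), snd (snd x) + d*ok*c))"
  note cd = cells_decomp[OF d ok per, folded \<phi>_def]
  define F where "F = (\<lambda>(i,j,s). \<Prod>t\<in>{t\<in>{1..d*ok*pl}. pidx d t \<noteq> pidx d s}. hlam eps q Q d lam i j s t - 1)"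
  define Y where "Y = (\<lambda>(i,j,s). \<Prod>t\<in>{1..d*ok}. \<Prod>a\<in>{a. a < pl \<and> (pidx d t = pidx d s \<longrightarrow> a \<noteq> 0)}.
          (eps ^ (a*ok) * hlam eps q Q d lam i j s t - 1))"
  have "prod F (cells lam {1..d*ok*pl}) = prod (F \<circ> \<phi>) (cells lam {1..d*ok} \<times> {..<pl})"
    unfolding cd(1) by (rule prod.reindex[OF cd(2)])
  also have "\<dots> = (\<Prod>x\<in>cells lam {1..d*ok}. \<Prod>c<pl. F (\<phi> (x,c)))"
    by (simp add: prod.cartesian_product)
  also have "\<dots> = (\<Prod>x\<in>cells lam {1..d*ok}. Y x ^ pl)"
  proof (rule prod.cong[OF refl])
    fix x assume x: "x \<in> cells lam {1..d*ok}"
    obtain i j s where xx: "x = (i,j,s)" by (metis prod_cases3)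
    have s: "s \<in> {1..d*ok}" using x xx by (auto simp: cells_def)
    have "F (\<phi> (x,c)) = Y x" if c: "c < pl" for c
      unfolding xx \<phi>_def F_def Y_def using inner_prod[OF d pl nz ep per s c] by simp
    then show "(\<Prod>c<pl. F (\<phi> (x,c))) = Y x ^ pl" by simp
  qed
  also have "\<dots> = prod Y (cells lam {1..d*ok}) ^ pl" by (simp add: prod_power_distrib)
  finally show ?thesis unfolding F_def Y_def .
qed



lemma sum_list_concat': "sum_list (concat xss) = sum_list (map sum_list (xss :: nat list list))"
  by (induction xss) auto

lemma sum_list_sort': "sum_list (sort (xs :: nat list)) = sum_list xs"
  by (metis mset_sort sum_mset_sum_list)

lemma beta_Cons: "beta (x # ys) = beta ys + sum_list ys"
proof -
  have "beta (x # ys) = (\<Sum>i<length ys. Suc i * ys ! i)"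
    unfolding beta_def by (simp add: sum.lessThan_Suc_shift del: sum.lessThan_Suc)
  also have "\<dots> = beta ys + (\<Sum>i<length ys. ys ! i)" by (simp add: beta_def sum.distrib)
  also have "(\<Sum>i<length ys. ys ! i) = sum_list ys" by (simp add: sum_list_sum_nth atLeast0LessThan)
  finally show ?thesis .
qed

lemma beta_rep: "2 * beta (replicate k x @ zs) + k*x = k*k*x + 2*k*sum_list zs + 2*beta zs"
proof (induction k)
  case 0 then show ?case by simp
next
  case (Suc k)
  have "beta (replicate (Suc k) x @ zs) = beta (replicate k x @ zs) + k*x + sum_list zs"
    by (simp add: beta_Cons sum_list_replicate)
  then show ?case using Suc by (simp add: algebra_simps)
qed

lemma sum_concat_rep: "sum_list (concat (map (replicate k) ys)) = k * sum_list (ys :: nat list)"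
  by (induction ys) (auto simp: sum_list_replicate algebra_simps)

lemma beta_concat_rep: "2 * beta (concat (map (replicate k) ys)) + k * sum_list ys = 2*k*k*beta ys + k*k*sum_list ys"
proof (induction ys)
  case Nil then show ?case by (simp add: beta_def)
next
  case (Cons y ys)
  have "2 * beta (replicate k y @ concat (map (replicate k) ys)) + k*y
     = k*k*y + 2*k*(k * sum_list ys) + 2*beta (concat (map (replicate k) ys))"
    using beta_rep[of k y "concat (map (replicate k) ys)"] by (simp add: sum_concat_rep)
  then show ?case using Cons by (simp add: beta_Cons algebra_simps)
qed

lemma rev_concat_rep: "rev (concat (map (replicate k) ys)) = concat (map (replicate k) (rev ys))"
  by (induction ys) auto

lemma sorted_concat_rep: "sorted (ys :: nat list) \<Longrightarrow> sorted (concat (map (replicate k) ys))"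
  by (induction ys) (auto simp: sorted_append)

lemma mset_concat_rep: "mset (concat (map (replicate k) ys)) = repeat_mset k (mset ys)"
  by (induction ys) auto

lemma upt_shift: "[i+a..<j+a] = map (\<lambda>s. s + a) [i..<j]"
proof (induction j)
  case 0 then show ?case by simp
next
  case (Suc j) then show ?case by (cases "i \<le> j") (auto simp: upt_Suc)
qed

lemma mset_all:
  assumes per: "\<forall>s c. 1 \<le> s \<longrightarrow> s \<le> d*ok \<longrightarrow> c < pl \<longrightarrow> lam (s + d*ok*c) = lam s"
  shows "c \<le> pl \<Longrightarrow> mset (concat (map lam [1..<d*ok*c+1])) = repeat_mset c (mset (concat (map lam [1..<d*ok+1])))"
proof (induction c)
  case 0 then show ?case by simp
next
  case (Suc c)
  have "[1..<d*ok*Suc c + 1] = [1..<d*ok*c+1] @ [1 + d*ok*c..<(d*ok + 1) + d*ok*c]"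
    using upt_add_eq_append[of 1 "d*ok*c+1" "d*ok"] by (simp add: algebra_simps)
  also have "[1 + d*ok*c..<(d*ok + 1) + d*ok*c] = map (\<lambda>s. s + d*ok*c) [1..<d*ok+1]" by (rule upt_shift)
  finally have u: "[1..<d*ok*Suc c + 1] = [1..<d*ok*c+1] @ map (\<lambda>s. s + d*ok*c) [1..<d*ok+1]" .
  have m: "map lam (map (\<lambda>s. s + d*ok*c) [1..<d*ok+1]) = map lam [1..<d*ok+1]"
    using per Suc.prems by (auto simp del: upt_Suc)
  have "mset (concat (map lam [1..<d*ok*Suc c + 1])) = mset (concat (map lam [1..<d*ok*c+1])) + mset (concat (map lam [1..<d*ok+1]))"
    unfolding u by (simp only: map_append concat_append mset_append m)
  then show ?case using Suc by (simp del: upt_Suc add: add.commute)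
qed

lemma sum_list_L: fixes lam :: "nat \<Rightarrow> nat list" shows "sum_list (concat (map lam [1..<m+1])) = (\<Sum>s\<in>{1..m}. sum_list (lam s))"
proof -
  have "sum_list (concat (map lam [1..<m+1])) = sum_list (map (\<lambda>s. sum_list (lam s)) [1..<m+1])"
    by (simp add: sum_list_concat' o_def del: upt_Suc)
  also have "\<dots> = (\<Sum>s\<in>{1..m}. sum_list (lam s))"
  proof -
    have "set [1..<m+1] = {1..m}" by auto
    then show ?thesis by (subst sum_list_distinct_conv_sum_set) (simp_all del: upt_Suc)
  qed
  finally show ?thesis .
qed

lemma beta_all:
  assumes per: "\<forall>s c. 1 \<le> s \<longrightarrow> s \<le> d*ok \<longrightarrow> c < pl \<longrightarrow> lam (s + d*ok*c) = lam s"
  shows "2 * beta (arrow (map lam [1..<d*ok*pl+1])) + pl * sum_list (concat (map lam [1..<d*ok+1]))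
    = 2*pl*pl*beta (arrow (map lam [1..<d*ok+1])) + pl*pl*sum_list (concat (map lam [1..<d*ok+1]))"
proof -
  let ?L = "concat (map lam [1..<d*ok+1])"
  have "sort (concat (map lam [1..<d*ok*pl+1])) = concat (map (replicate pl) (sort ?L))"
  proof (rule properties_for_sort)
    show "mset (concat (map (replicate pl) (sort ?L))) = mset (concat (map lam [1..<d*ok*pl+1]))"
      by (subst mset_all[OF per order.refl]) (simp add: mset_concat_rep del: upt_Suc)
    show "sorted (concat (map (replicate pl) (sort ?L)))" by (simp add: sorted_concat_rep del: upt_Suc)
  qed
  then have "arrow (map lam [1..<d*ok*pl+1]) = concat (map (replicate pl) (arrow (map lam [1..<d*ok+1])))"
    by (simp add: arrow_def rev_concat_rep del: upt_Suc)
  moreover have "sum_list (arrow (map lam [1..<d*ok+1])) = sum_list ?L"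
    by (simp add: arrow_def sum_list_sort' del: upt_Suc)
  ultimately show ?thesis using beta_concat_rep[of pl "arrow (map lam [1..<d*ok+1])"] by simp
qed

lemma block_sum:
  assumes "d \<ge> 1" "k \<le> p"
  shows "(\<Sum>t\<in>{1..k}. sum_list (map sum_list (blk p d lam t))) = (\<Sum>s\<in>{1..d*k}. sum_list (lam s))"
proof -
  have "(\<Sum>t\<in>{1..k}. sum_list (map sum_list (blk p d lam t))) = (\<Sum>t\<in>{1..1*k}. sum_list (map sum_list (blk p d lam t)))" by simp
  also have "\<dots> = (\<Sum>c<k. \<Sum>t\<in>{1..1}. sum_list (map sum_list (blk p d lam (t + 1*c))))" by (rule sum_regroup)
  also have "\<dots> = (\<Sum>c<k. \<Sum>s\<in>{1..d}. sum_list (lam (s + d*c)))"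
  proof (rule sum.cong[OF refl])
    fix c assume "c \<in> {..<k}"
    then have cm: "c mod p = c" using assms by simp
    have "blk p d lam (1 + c) = map (\<lambda>s. lam (s + d*c)) [1..<d+1]"
      unfolding blk_def using cm by (simp add: algebra_simps del: upt_Suc)
    then show "(\<Sum>t\<in>{1..1}. sum_list (map sum_list (blk p d lam (t + 1*c)))) = (\<Sum>s\<in>{1..d}. sum_list (lam (s + d*c)))"
      using sum_list_L[of "\<lambda>s. lam (s + d*c)" d] by (simp add: sum_list_concat' o_def del: upt_Suc)
  qed
  also have "\<dots> = (\<Sum>s\<in>{1..d*k}. sum_list (lam s))" by (rule sum_regroup[symmetric])
  finally show ?thesis .
qed

lemma ell_sq: "2 * ell_w p b + (\<Sum>i=1..p. b i ^ 2) = (\<Sum>i=1..p. b i) ^ 2"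
proof (induction p)
  case 0 then show ?case by (simp add: ell_w_def)
next
  case (Suc p)
  have "ell_w (Suc p) b = (\<Sum>i=1..p. \<Sum>j=i+1..Suc p. b i * b j) + (\<Sum>j=Suc p+1..Suc p. b (Suc p) * b j)"
    by (simp add: ell_w_def)
  also have "(\<Sum>j=Suc p+1..Suc p. b (Suc p) * b j) = 0" by simp
  also have "(\<Sum>i=1..p. \<Sum>j=i+1..Suc p. b i * b j) = (\<Sum>i=1..p. (\<Sum>j=i+1..p. b i * b j) + b i * b (Suc p))"
    by (rule sum.cong[OF refl]) simp
  also have "\<dots> = ell_w p b + (\<Sum>i=1..p. b i) * b (Suc p)"
    by (simp add: ell_w_def sum.distrib sum_distrib_right)
  finally have "ell_w (Suc p) b = ell_w p b + (\<Sum>i=1..p. b i) * b (Suc p)" by simp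
  then show ?case using Suc by (simp add: power2_eq_square algebra_simps)
qed



lemma gauss2: "2 * (\<Sum>c<(pl::nat). c) = pl * (pl - 1)"
  by (induction pl) (auto simp: algebra_simps)

lemma even_sq_add: "even ((x::nat)^2 + x)"
  by (auto simp: power2_eq_square)

lemma even_int_prod: "even ((x::int) * (x - 1))"
  by (cases "even x") auto

lemma gen_alpha: fixes aa kk m o' P dd Aa :: rat
  assumes h1: "2*aa = 2*P*Aa + o'*(P*(P-1))*m" and h2: "2*kk = (o'*P)*((o'*P)-1)" and h3: "P \<noteq> 0"
  shows "m*((o'*P)*dd*(o'*P) - dd*o')/2 - dd*aa/P = dd*(m*kk) - dd*Aa"
proof -
  have aa: "aa = P*Aa + o'*(P*(P-1))*m/2" using h1 by (simp add: field_simps)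
  have kk: "kk = (o'*P)*((o'*P)-1)/2" using h2 by (simp add: field_simps)
  show ?thesis unfolding aa kk using h3 by (simp add: field_simps)
qed

theorem theorem3p12:
  fixes p d n :: nat and b :: "nat \<Rightarrow> nat" and lam :: "nat \<Rightarrow> nat list"
    and eps q :: complex and Q :: "nat \<Rightarrow> complex"
  assumes "p > 1" and "d \<ge> 1" and "n \<ge> 3"
    and "is_comp p n b" and "lam \<in> Pdb p d b"
    and "eps ^ p = 1" and "\<forall>k. 0 < k \<and> k < p \<longrightarrow> eps ^ k \<noteq> 1"
    and "q \<noteq> 0" and "\<forall>i\<in>{1..d}. Q i \<noteq> 0"
  shows "gamma_lam p d b lam \<in> \<int> \<and> alpha_lam p d n b lam \<in> \<int>
    \<and> in_Zring d eps (g_lam p d n b lam eps)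
    \<and> f_lam p d n b lam eps q Q =
        eps powi ((int d * int (olam p d lam) * int n * (1 - int (plam p d lam))) div 2)
        * g_lam p d n b lam eps q Q ^ plam p d lam"
proof -
  have p0: "p > 0" using assms(1) by simp
  have d1: "d \<ge> 1" by (rule assms(2))
  have nz: "eps \<noteq> 0" using assms(6) p0 by (metis power_0_left less_not_refl2 zero_neq_one)
  define ok where "ok = olam p d lam"
  define pl where "pl = plam p d lam"
  have ok1: "ok \<ge> 1" and okd: "ok dvd p" and bper0: "\<forall>t\<ge>1. blk p d lam (ok + t) = blk p d lam t"
    using olam_props[OF p0, of d lam] by (simp_all add: ok_def)
  have pdef: "p = ok * pl" using okd by (simp add: pl_def plam_def ok_def)
  have pl1: "pl \<ge> 1" using pdef p0 by (cases pl) auto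
  have okp: "ok \<le> p" using pdef pl1 by simp
  have ep: "eps ^ (ok*pl) = 1" using assms(6) pdef by simp
  have bt: "\<And>t. t \<in> {1..p} \<Longrightarrow> sum_list (map sum_list (blk p d lam t)) = b t"
    using assms(5) by (auto simp: Pdb_def)
  have blkper: "\<And>t c. t \<ge> 1 \<Longrightarrow> blk p d lam (t + ok*c) = blk p d lam t"
    using per_mult[OF bper0] by (simp add: add.commute)
  have bper: "\<And>t c. t \<ge> 1 \<Longrightarrow> t + ok*c \<le> p \<Longrightarrow> b (t + ok*c) = b t"
  proof -
    fix t c assume "t \<ge> 1" "t + ok*c \<le> p"
    then show "b (t + ok*c) = b t" using bt[of t] bt[of "t + ok*c"] blkper[of t c] by auto
  qed
  have ranget: "\<And>t c. t \<in> {1..ok} \<Longrightarrow> c < pl \<Longrightarrow> t + ok*c \<le> p \<and> 1 \<le> t"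
  proof -
    fix t c assume "t \<in> {1..ok}" "c < pl"
    then have "t + ok*c \<le> ok + ok*c" "ok + ok*c = ok*(c+1)" by (auto simp: algebra_simps)
    moreover have "ok*(c+1) \<le> ok*pl" using \<open>c < pl\<close> by (intro mult_le_mono2) simp
    then show "t + ok*c \<le> p \<and> 1 \<le> t" using pdef \<open>t \<in> {1..ok}\<close> by auto
  qed
  have per: "\<forall>s c. 1 \<le> s \<longrightarrow> s \<le> d*ok \<longrightarrow> c < pl \<longrightarrow> lam (s + d*ok*c) = lam s"
  proof (intro allI impI)
    fix s c assume s: "1 \<le> s" "s \<le> d*ok" and c: "c < pl"
    have "s + d*ok*c \<le> d*ok + d*ok*c" using s by simp
    also have "\<dots> = d*ok*(c+1)" by (simp add: algebra_simps)
    also have "\<dots> \<le> d*ok*pl" using c by (intro mult_le_mono2) simp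
    finally have "s + d*ok*c \<le> p*d" using pdef by (simp add: algebra_simps)
    then show "lam (s + d*ok*c) = lam s" using lam_period_mult[OF d1 bper0] s by simp
  qed
  have Ip: "{1..p} = {1..ok*pl}" using pdef by simp
  define M where "M = (\<Sum>t\<in>{1..ok}. b t)"
  define S2 where "S2 = (\<Sum>t\<in>{1..ok}. b t ^ 2)"
  define A where "A = (\<Sum>t\<in>{1..ok}. t * b t)"
  define Bs where "Bs = (\<Sum>a\<in>{1..ok}. beta (arrow (blk p d lam a)))"
  define Bm where "Bm = beta (arrow (map lam [1..<d*ok+1]))"
  have F1: "n = pl * M"
  proof -
    have "n = (\<Sum>i\<in>{1..ok*pl}. b i)" using assms(4) pdef by (simp add: is_comp_def)
    also have "\<dots> = (\<Sum>c<pl. \<Sum>t\<in>{1..ok}. b (t + ok*c))" by (rule sum_regroup)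
    also have "\<dots> = (\<Sum>c<pl. M)" unfolding M_def
      by (rule sum.cong[OF refl], rule sum.cong[OF refl]) (use bper ranget in auto)
    finally show ?thesis by simp
  qed
  have F2: "(\<Sum>i\<in>{1..p}. b i ^ 2) = pl * S2"
  proof -
    have "(\<Sum>i\<in>{1..p}. b i ^ 2) = (\<Sum>c<pl. \<Sum>t\<in>{1..ok}. b (t + ok*c) ^ 2)" unfolding Ip by (rule sum_regroup)
    also have "\<dots> = (\<Sum>c<pl. S2)" unfolding S2_def
      by (rule sum.cong[OF refl], rule sum.cong[OF refl]) (use bper ranget in auto)
    finally show ?thesis by simp
  qed
  have F3: "(\<Sum>a\<in>{1..p}. beta (arrow (blk p d lam a))) = pl * Bs"
  proof -
    have "(\<Sum>a\<in>{1..p}. beta (arrow (blk p d lam a))) = (\<Sum>c<pl. \<Sum>t\<in>{1..ok}. beta (arrow (blk p d lam (t + ok*c))))"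
      unfolding Ip by (rule sum_regroup)
    also have "\<dots> = (\<Sum>c<pl. Bs)" unfolding Bs_def
      by (rule sum.cong[OF refl], rule sum.cong[OF refl]) (use blkper in auto)
    finally show ?thesis by simp
  qed
  have F4: "2 * alpha_comp p b = 2 * pl * A + ok * (pl * (pl - 1)) * M"
  proof -
    have "alpha_comp p b = (\<Sum>c<pl. \<Sum>t\<in>{1..ok}. (t + ok*c) * b (t + ok*c))"
      unfolding alpha_comp_def Ip by (rule sum_regroup)
    also have "\<dots> = (\<Sum>c<pl. A + ok*c*M)" unfolding A_def M_def
    proof (rule sum.cong[OF refl])
      fix c assume "c \<in> {..<pl}"
      then have "(\<Sum>t\<in>{1..ok}. (t + ok*c) * b (t + ok*c)) = (\<Sum>t\<in>{1..ok}. t * b t + ok*c*b t)"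
        using bper ranget by (intro sum.cong) (auto simp: algebra_simps)
      then show "(\<Sum>t\<in>{1..ok}. (t + ok*c) * b (t + ok*c)) = (\<Sum>t\<in>{1..ok}. t * b t) + ok*c*(\<Sum>t\<in>{1..ok}. b t)"
        by (simp add: sum.distrib sum_distrib_left)
    qed
    also have "\<dots> = pl * A + ok*M*(\<Sum>c<pl. c)" by (simp add: sum.distrib sum_distrib_left sum_distrib_right algebra_simps)
    finally show ?thesis using gauss2[of pl] by (simp add: algebra_simps)
  qed
  have F5: "sum_list (concat (map lam [1..<d*ok+1])) = M"
    using sum_list_L[of lam "d*ok"] block_sum[OF d1 okp, of lam] bt okp by (simp add: M_def del: upt_Suc)
  have F6: "2 * beta (arrow (map lam [1..<p*d+1])) + pl * M = 2*pl*pl*Bm + pl*pl*M"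
    using beta_all[OF per] F5 pdef by (simp add: Bm_def algebra_simps del: upt_Suc)
  have F7: "2 * ell_w p b + pl * S2 = n^2"
    using ell_sq[of p b] F2 assms(4) by (simp add: is_comp_def)
  have F8: "even (S2 + M)"
  proof -
    have "S2 + M = (\<Sum>t\<in>{1..ok}. b t ^ 2 + b t)" by (simp add: S2_def M_def sum.distrib)
    then show ?thesis by (simp add: dvd_sum even_sq_add)
  qed
  define X where "X = int pl * int M^2 - int S2 - 2*int pl*int Bm - int pl*int M + int M + 2*int Bs"
  define Gm where "Gm = X div 2"
  have evX: "even X"
  proof -
    have "X = int pl*(int M*(int M - 1)) + 2*int M - int (S2+M) - 2*int pl*int Bm + 2*int Bs"
      by (simp add: X_def power2_eq_square algebra_simps)
    moreover have "even (int (S2 + M))" using F8 by simp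
    moreover have "even (int M*(int M - 1))" by (rule even_int_prod)
    ultimately show ?thesis by simp
  qed
  have F3': "(\<Sum>a=1..p. int (beta (arrow (blk p d lam a)))) = int pl * int Bs"
    using F3 by (metis of_nat_mult of_nat_sum)
  have F1': "int n = int pl * int M" using F1 by simp
  have F6': "2 * int (beta (arrow (map lam [1..<p*d+1]))) + int pl * int M = 2*int pl*int pl*int Bm + int pl*int pl*int M"
    using F6 by (metis (mono_tags) of_nat_add of_nat_mult of_nat_numeral)
  have F7': "2 * int (ell_w p b) + int pl * int S2 = int n^2"
    using F7 by (metis (mono_tags) of_nat_add of_nat_mult of_nat_numeral of_nat_power)
  have q2: "2 * qexp p d b lam = int pl * X"
    unfolding qexp_def F3' X_def using F6' F7' F1' by (simp add: algebra_simps power2_eq_square)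
  have qx: "qexp p d b lam = int pl * Gm"
  proof -
    obtain Y where Y: "X = 2 * Y" using evX by (elim evenE)
    then show ?thesis using q2 by (simp add: Gm_def)
  qed
  define K where "K = int d * (int M * ((int p * (int p - 1)) div 2)) - int d * int A"
  have nl: "nlam p d n lam = M" using F1 pl1 by (simp add: nlam_def pl_def[symmetric])
  have K2: "2 * ((int p * (int p - 1)) div 2) = int p * (int p - 1)" using even_int_prod[of "int p"] by simp
  have F4': "2 * int (alpha_comp p b) = 2 * int pl * int A + int ok * (int pl * (int pl - 1)) * int M"
  proof -
    have "int (2 * alpha_comp p b) = int (2 * pl * A + ok * (pl * (pl - 1)) * M)" using F4 by simp
    moreover have "int (pl - 1) = int pl - 1" using pl1 by simp
    ultimately show ?thesis by (simp only: of_nat_add of_nat_mult of_nat_numeral)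
  qed
  have gam: "gamma_lam p d b lam = of_int Gm"
    using pl1 by (simp add: gamma_lam_def pl_def[symmetric] qx)
  have alp: "alpha_lam p d n b lam = of_int K"
  proof -
    have "rat_of_int (2 * int (alpha_comp p b)) = rat_of_int (2 * int pl * int A + int ok * (int pl * (int pl - 1)) * int M)"
      using F4' by simp
    then have a2: "2 * of_nat (alpha_comp p b) = 2 * of_nat pl * of_nat A + of_nat ok * (of_nat pl * (of_nat pl - 1)) * (of_nat M :: rat)"
      by simp
    have k2: "2 * rat_of_int ((int p * (int p - 1)) div 2) = of_nat p * (of_nat p - 1)"
    proof -
      define D where "D = (int p * (int p - 1)) div 2"
      have "2 * rat_of_int D = rat_of_int (2 * D)" by simp
      also have "\<dots> = rat_of_int (int p * (int p - 1))" using K2 by (simp only: D_def)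
      also have "\<dots> = of_nat p * (of_nat p - 1)" by simp
      finally show ?thesis unfolding D_def .
    qed
    have plnz: "(of_nat pl :: rat) \<noteq> 0" using pl1 by simp
    have "alpha_lam p d n b lam = of_nat M * (of_nat (p*d*p) - of_nat (d * ok)) / 2 - of_nat d * of_nat (alpha_comp p b) / of_nat pl"
      by (simp add: alpha_lam_def nl ok_def[symmetric] pl_def[symmetric])
    also have "\<dots> = of_nat M*(((of_nat ok*of_nat pl)*of_nat d*(of_nat ok*of_nat pl)) - of_nat d*of_nat ok)/2 - of_nat d * of_nat (alpha_comp p b)/of_nat pl"
      using pdef by simp
    also have "\<dots> = of_nat d*(of_nat M * rat_of_int ((int p * (int p - 1)) div 2)) - of_nat d * of_nat A"
      by (rule gen_alpha[OF a2 _ plnz]) (use k2 pdef in simp)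
    also have "\<dots> = of_int K" unfolding K_def by simp
    finally show ?thesis .
  qed
  have Eeq: "(int (p*d) * int n * (int p - 1)) div 2 - int d * int (alpha_comp p b)
      = (int d * int ok * int n * (1 - int pl)) div 2 + K * int pl"
  proof -
    obtain w where w: "int p * (int p - 1) = 2 * w" using even_int_prod[of "int p"] by (elim evenE)
    obtain v0 where v0: "int pl * (int pl - 1) = 2 * v0" using even_int_prod[of "int pl"] by (elim evenE)
    have e1: "int (p*d) * int n * (int p - 1) = 2 * (int d * int n * w)" using w by (simp add: algebra_simps)
    have e2: "int d * int ok * int n * (1 - int pl) = 2 * (- int d * int ok * int M * v0)"
      using v0 F1' by (simp add: algebra_simps)
    have Kw: "K = int d * int M * w - int d * int A" using w by (simp add: K_def)
    have pp: "int p = int ok * int pl" using pdef by simp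
    have "2 * (int d * int n * w - int d * int (alpha_comp p b)) = 2 * (- int d * int ok * int M * v0 + K * int pl)"
    proof -
      have "2 * (int d * int n * w - int d * int (alpha_comp p b)) = int d * int n * (2*w) - int d * (2 * int (alpha_comp p b))"
        by (simp add: algebra_simps)
      also have "\<dots> = int d * (int pl * int M) * (2 * w) - int d * (2 * int pl * int A + int ok * (2 * v0) * int M)"
        using v0 F4' F1' by simp
      also have "\<dots> = 2 * (- int d * int ok * int M * v0 + (int d * int M * w - int d * int A) * int pl)"
        by (simp add: algebra_simps)
      finally show ?thesis using Kw by simp
    qed
    then show ?thesis unfolding e1 e2 by simp
  qed
  define PQ where "PQ = (\<Prod>i=1..d. Q i)"
  define Pg where "Pg = (\<Prod>(i,j,s)\<in>cells lam {1..d*ok}. \<Prod>t\<in>{1..d*ok}. \<Prod>a\<in>{a. a < pl \<and> (pidx d t = pidx d s \<longrightarrow> a \<noteq> 0)}.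
          (eps ^ (a*ok) * hlam eps q Q d lam i j s t - 1))"
  have gl: "g_lam p d n b lam eps q Q = eps powi K * q powi Gm * PQ ^ (M*(p-1)) * Pg"
    unfolding g_lam_def Let_def Pg_def PQ_def ok_def[symmetric] pl_def[symmetric] nl alp gam by simp
  have pd: "p*d = d*ok*pl" using pdef by simp
  have fl: "f_lam p d n b lam eps q Q = eps powi ((int (p*d) * int n * (int p - 1)) div 2 - int d * int (alpha_comp p b))
      * q powi qexp p d b lam * PQ ^ (n*(p-1)) * Pg ^ pl"
    unfolding f_lam_def PQ_def Pg_def pd prod_fold[OF d1 ok1 pl1 nz ep per, of q Q] ..
  have main: "f_lam p d n b lam eps q Q = eps powi ((int d * int ok * int n * (1 - int pl)) div 2) * g_lam p d n b lam eps q Q ^ pl"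
  proof -
    have "f_lam p d n b lam eps q Q = eps powi ((int d * int ok * int n * (1 - int pl)) div 2) * eps powi (K * int pl)
      * q powi (Gm * int pl) * (PQ ^ (M*(p-1))) ^ pl * Pg ^ pl"
    proof -
      have "n*(p-1) = M*(p-1)*pl" using F1 by simp
      then have pw: "PQ^(n*(p-1)) = (PQ^(M*(p-1)))^pl" by (simp only: power_mult)
      show ?thesis unfolding fl Eeq qx pw using nz by (simp add: power_int_add algebra_simps)
    qed
    also have "\<dots> = eps powi ((int d * int ok * int n * (1 - int pl)) div 2) * g_lam p d n b lam eps q Q ^ pl"
      unfolding gl by (simp add: power_mult_distrib power_int_power')
    finally show ?thesis .
  qed
  show ?thesis
    using main Zr_g[OF assms(6) p0 d1, of n b lam] gam alp
    by (simp add: ok_def pl_def)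
qed

end
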